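(* Let $\boldsymbol{u}^\star\in\mathbb{R}^n\setminus\{\boldsymbol{0}\}$ and $f(\boldsymbol{u})=\frac12\|\boldsymbol{u}\boldsymbol{u}^{\mathrm T}-\boldsymbol{u}^\star{\boldsymbol{u}^\star}^{\mathrm T}\|_1$ on $\mathbb{R}^n$. Then for every $\boldsymbol{w}\in\mathbb{R}^n$, $$df(\boldsymbol{u}^\star)(\boldsymbol{w})\ge\min\Big\{\alpha(\boldsymbol{u}^\star),\ \tfrac12\alpha(\boldsymbol{u}^\star)\,|\operatorname{supp}(\boldsymbol{u}^\star)|\Big\}\cdot\|\boldsymbol{w}\|_1,$$ where $\alpha(\boldsymbol{u}^\star):=\min\{|u_i^\star|:i\in\operatorname{supp}(\boldsymbol{u}^\star)\}>0$.
   Context: $\|\cdot\|_1$ is the entrywise $\ell_1$-norm (for vectors and matrices). $\operatorname{supp}(\boldsymbol{x})=\{i:x_i\ne0\}$. $df(\boldsymbol{x})(\boldsymbol{w})=\lim_{t\searrow0}(f(\boldsymbol{x}+t\boldsymbol{w})-f(\boldsymbol{x}))/t$ is the directional derivative (which exists for this $f$). *)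

theory Defs
  imports "HOL-Analysis.Analysis"
begin

definition l1norm :: "real ^ 'n \<Rightarrow> real" where
  "l1norm w = (\<Sum>i\<in>UNIV. \<bar>w $ i\<bar>)"

definition supp :: "real ^ 'n \<Rightarrow> 'n set" where
  "supp u = {i. u $ i \<noteq> 0}"

definition alpha :: "real ^ 'n \<Rightarrow> real" where
  "alpha u = Min ((\<lambda>i. \<bar>u $ i\<bar>) ` supp u)"

definition fobj :: "real ^ 'n \<Rightarrow> real ^ 'n \<Rightarrow> real" where
  "fobj ustar u = (1/2) * (\<Sum>i\<in>UNIV. \<Sum>j\<in>UNIV. \<bar>u $ i * u $ j - ustar $ i * ustar $ j\<bar>)"

definition dir_deriv :: "(real ^ 'n \<Rightarrow> real) \<Rightarrow> real ^ 'n \<Rightarrow> real ^ 'n \<Rightarrow> real" where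
  "dir_deriv f x w = Lim (at_right 0) (\<lambda>t. (f (x + t *\<^sub>R w) - f x) / t)"

end

theory Submission
  imports Defs
begin

lemma dd_eq:
  fixes u w :: "real ^ 'n"
  shows "dir_deriv (fobj u) u w = (1/2) * (\<Sum>i\<in>UNIV. \<Sum>j\<in>UNIV. \<bar>u $ i * w $ j + w $ i * u $ j\<bar>)"
proof -
  define h where "h = (\<lambda>t::real. (1/2) * (\<Sum>i\<in>UNIV. \<Sum>j\<in>UNIV. \<bar>u $ i * w $ j + w $ i * u $ j + t * (w $ i * w $ j)\<bar>))"
  have ev: "\<forall>\<^sub>F t in at_right 0. h t = (fobj u (u + t *\<^sub>R w) - fobj u u) / t"
    unfolding eventually_at_right_field
  proof (intro exI[of _ 1] conjI allI impI)
    fix t :: real assume t: "0 < t" "t < 1"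
    have trm: "\<bar>(u + t *\<^sub>R w) $ i * (u + t *\<^sub>R w) $ j - u $ i * u $ j\<bar>
        = t * \<bar>u $ i * w $ j + w $ i * u $ j + t * (w $ i * w $ j)\<bar>" for i j
    proof -
      have "(u + t *\<^sub>R w) $ i * (u + t *\<^sub>R w) $ j - u $ i * u $ j
          = t * (u $ i * w $ j + w $ i * u $ j + t * (w $ i * w $ j))"
        by (simp add: algebra_simps)
      thus ?thesis using t(1) by (simp add: abs_mult)
    qed
    have "fobj u (u + t *\<^sub>R w) = t * h t"
      unfolding fobj_def h_def trm by (simp add: sum_distrib_left)
    moreover have "fobj u u = 0" by (simp add: fobj_def)
    ultimately show "h t = (fobj u (u + t *\<^sub>R w) - fobj u u) / t" using t by simp
  qed simp
  have "continuous_on UNIV h" unfolding h_def by (intro continuous_intros)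
  hence "isCont h 0" by (simp add: continuous_on_eq_continuous_at)
  hence "(h \<longlongrightarrow> h 0) (at 0)" by (simp add: isCont_def)
  hence "(h \<longlongrightarrow> h 0) (at_right 0)" by (rule filterlim_mono) (auto intro: at_le)
  hence "((\<lambda>t. (fobj u (u + t *\<^sub>R w) - fobj u u) / t) \<longlongrightarrow> h 0) (at_right 0)"
    using ev by (rule Lim_transform_eventually)
  hence "dir_deriv (fobj u) u w = h 0"
    unfolding dir_deriv_def by (intro tendsto_Lim) (simp_all add: trivial_limit_at_right_real)
  thus ?thesis by (simp add: h_def)
qed

theorem proposition1:
  fixes ustar w :: "real ^ 'n"
  assumes "ustar \<noteq> 0"
  shows "dir_deriv (fobj ustar) ustar w
           \<ge> min (alpha ustar) ((1/2) * alpha ustar * real (card (supp ustar))) * l1norm w"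
proof -
  let ?u = ustar
  let ?S = "supp ?u"
  define a where "a = alpha ?u"
  define m where "m = min a ((1/2) * a * real (card ?S))"
  have fin: "finite ?S" by simp
  have ale: "a \<le> \<bar>?u $ i\<bar>" if "i \<in> ?S" for i
    unfolding a_def alpha_def using that by (intro Min_le) auto
  have col: "(\<Sum>i\<in>UNIV. \<bar>?u $ i * w $ j + w $ i * ?u $ j\<bar>) \<ge> 2 * m * \<bar>w $ j\<bar>" for j
  proof (cases "j \<in> ?S")
    case True
    have "2 * m * \<bar>w $ j\<bar> \<le> 2 * a * \<bar>w $ j\<bar>"
      unfolding m_def by (intro mult_right_mono) auto
    also have "\<dots> \<le> \<bar>?u $ j * w $ j + w $ j * ?u $ j\<bar>"
    proof -
      have e: "?u $ j * w $ j + w $ j * ?u $ j = 2 * (?u $ j * w $ j)" by simp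
      show ?thesis unfolding e abs_mult using ale[OF True]
        by (simp add: mult_right_mono)
    qed
    also have "\<dots> \<le> (\<Sum>i\<in>UNIV. \<bar>?u $ i * w $ j + w $ i * ?u $ j\<bar>)"
      by (rule member_le_sum) auto
    finally show ?thesis .
  next
    case False
    hence z: "?u $ j = 0" by (simp add: supp_def)
    have "2 * m * \<bar>w $ j\<bar> \<le> a * real (card ?S) * \<bar>w $ j\<bar>"
      unfolding m_def by (intro mult_right_mono) auto
    also have "a * real (card ?S) = (\<Sum>i\<in>?S. a)" by simp
    also have "\<dots> \<le> (\<Sum>i\<in>?S. \<bar>?u $ i\<bar>)" by (intro sum_mono ale)
    also have "\<dots> \<le> (\<Sum>i\<in>UNIV. \<bar>?u $ i\<bar>)" by (intro sum_mono2) auto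
    finally have "2 * m * \<bar>w $ j\<bar> \<le> (\<Sum>i\<in>UNIV. \<bar>?u $ i\<bar>) * \<bar>w $ j\<bar>"
      by (simp add: mult_right_mono)
    also have "\<dots> = (\<Sum>i\<in>UNIV. \<bar>?u $ i * w $ j + w $ i * ?u $ j\<bar>)"
      by (simp add: z sum_distrib_right abs_mult)
    finally show ?thesis .
  qed
  have "m * l1norm w = (1/2) * (\<Sum>j\<in>UNIV. 2 * m * \<bar>w $ j\<bar>)"
    by (simp add: l1norm_def sum_distrib_left)
  also have "\<dots> \<le> (1/2) * (\<Sum>j\<in>UNIV. \<Sum>i\<in>UNIV. \<bar>?u $ i * w $ j + w $ i * ?u $ j\<bar>)"
    using col by (intro mult_left_mono sum_mono) auto
  also have "\<dots> = (1/2) * (\<Sum>i\<in>UNIV. \<Sum>j\<in>UNIV. \<bar>?u $ i * w $ j + w $ i * ?u $ j\<bar>)"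
    by (rule arg_cong[where f="\<lambda>x. (1/2) * x"], rule sum.swap)
  also have "\<dots> = dir_deriv (fobj ?u) ?u w" by (simp add: dd_eq)
  finally show ?thesis unfolding m_def a_def .
qed

end
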